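(* Let $N\ge 10^{40}$ be real, let $\mathcal{A}=\mathbb{Z}\cap(N,N+3N^{2/3})$, $X=\max\mathcal{A}$, $z=X^{1/5}$ and $y=X^{1/1.85}$. Then $$\sum_{\substack{q\text{ prime}\\ z\le q<y}}|\mathcal{A}_{q^2}|\le 0.03\,|\mathcal{A}|^{0.82}.$$
   Context: For a positive integer $d$, $\mathcal{A}_d=\{a\in\mathcal{A}: d\mid a\}$, and $|\cdot|$ denotes cardinality. *)

theory Defs
  imports "HOL-Analysis.Analysis" "HOL-Computational_Algebra.Primes"
begin

definition setA :: "real \<Rightarrow> int set" where
  "setA N = {a :: int. N < real_of_int a \<and> real_of_int a < N + 3 * N powr (2/3)}"

definition multiples_in :: "int set \<Rightarrow> int \<Rightarrow> int set" where
  "multiples_in A d = {a \<in> A. d dvd a}"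

end

theory Submission
  imports Defs
begin

lemma Ioo_int_eq: "{k::int. a < real_of_int k \<and> real_of_int k < b} = {\<lfloor>a\<rfloor>+1 .. \<lceil>b\<rceil>-1}"
proof (intro set_eqI iffI)
  fix k assume "k \<in> {k::int. a < real_of_int k \<and> real_of_int k < b}"
  then show "k \<in> {\<lfloor>a\<rfloor>+1 .. \<lceil>b\<rceil>-1}"
    by (auto simp: floor_less_iff less_ceiling_iff int_le_real_less)
next
  fix k assume "k \<in> {\<lfloor>a\<rfloor>+1 .. \<lceil>b\<rceil>-1}"
  then show "k \<in> {k::int. a < real_of_int k \<and> real_of_int k < b}"
  proof -
    assume h: "k \<in> {\<lfloor>a\<rfloor>+1 .. \<lceil>b\<rceil>-1}"
    then have "real_of_int k \<ge> real_of_int \<lfloor>a\<rfloor> + 1" "real_of_int k \<le> real_of_int \<lceil>b\<rceil> - 1" by auto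
    moreover have "a < real_of_int \<lfloor>a\<rfloor> + 1" "real_of_int \<lceil>b\<rceil> - 1 < b" by linarith+
    ultimately show ?thesis by simp linarith
  qed
qed

lemma card_Ioo_int_le: assumes ab: "a \<le> b" shows "real (card {k::int. a < real_of_int k \<and> real_of_int k < b}) \<le> b - a + 1"
proof -
  have "real (card {\<lfloor>a\<rfloor>+1 .. \<lceil>b\<rceil>-1}) = real (nat (\<lceil>b\<rceil> - 1 - \<lfloor>a\<rfloor>))" by simp
  also have "\<dots> \<le> b - a + 1"
    proof -
    have "real_of_int \<lfloor>a\<rfloor> \<le> a" "a < real_of_int \<lfloor>a\<rfloor> + 1" "real_of_int \<lceil>b\<rceil> - 1 < b" "b \<le> real_of_int \<lceil>b\<rceil>" by linarith+
    moreover have "real (nat (\<lceil>b\<rceil> - 1 - \<lfloor>a\<rfloor>)) = max 0 (real_of_int \<lceil>b\<rceil> - 1 - real_of_int \<lfloor>a\<rfloor>)"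
      by (cases "\<lceil>b\<rceil> - 1 - \<lfloor>a\<rfloor> \<ge> 0") auto
    ultimately show ?thesis using ab by linarith
  qed
  finally show ?thesis by (simp add: Ioo_int_eq)
qed

lemma card_Ioo_int_ge: "real (card {k::int. a < real_of_int k \<and> real_of_int k < b}) \<ge> b - a - 1"
proof -
  have "real (card {\<lfloor>a\<rfloor>+1 .. \<lceil>b\<rceil>-1}) = real (nat (\<lceil>b\<rceil> - 1 - \<lfloor>a\<rfloor>))" by simp
  also have "\<dots> \<ge> b - a - 1"
    proof -
    have "real_of_int \<lfloor>a\<rfloor> \<le> a" "a < real_of_int \<lfloor>a\<rfloor> + 1" "real_of_int \<lceil>b\<rceil> - 1 < b" "b \<le> real_of_int \<lceil>b\<rceil>" by linarith+
    moreover have "real (nat (\<lceil>b\<rceil> - 1 - \<lfloor>a\<rfloor>)) = max 0 (real_of_int \<lceil>b\<rceil> - 1 - real_of_int \<lfloor>a\<rfloor>)"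
      by (cases "\<lceil>b\<rceil> - 1 - \<lfloor>a\<rfloor> \<ge> 0") auto
    ultimately show ?thesis by linarith
  qed
  finally show ?thesis by (simp add: Ioo_int_eq)
qed


lemma card_mult_le:
  assumes d: "d > 0"
  shows "real (card (multiples_in (setA N) d)) \<le> 3 * N powr (2/3) / real_of_int d + 1"
proof -
  define L where "L = 3 * N powr (2/3)"
  define K where "K = {k::int. N / real_of_int d < real_of_int k \<and> real_of_int k < (N + L) / real_of_int d}"
  have sub: "multiples_in (setA N) d \<subseteq> (\<lambda>k. d * k) ` K"
  proof
    fix a assume "a \<in> multiples_in (setA N) d"
    then have r: "N < real_of_int a" "real_of_int a < N + L" and "d dvd a"
      unfolding multiples_in_def setA_def L_def by auto
    then obtain k where a: "a = d * k" by (elim dvdE)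
    have "N / real_of_int d < real_of_int k" using r a d by (simp add: divide_less_eq mult.commute)
    moreover have "real_of_int k < (N + L) / real_of_int d" using r a d by (simp add: less_divide_eq mult.commute)
    ultimately show "a \<in> (\<lambda>k. d * k) ` K" using a K_def by auto
  qed
  have fin: "finite K" unfolding K_def Ioo_int_eq by simp
  have "card (multiples_in (setA N) d) \<le> card ((\<lambda>k. d * k) ` K)"
    by (rule card_mono[OF finite_imageI[OF fin] sub])
  also have "\<dots> \<le> card K" by (rule card_image_le[OF fin])
  finally have "real (card (multiples_in (setA N) d)) \<le> real (card K)" by simp
  also have "\<dots> \<le> (N + L) / real_of_int d - N / real_of_int d + 1"
    unfolding K_def
    by (rule card_Ioo_int_le) (use d in \<open>auto simp: L_def divide_right_mono\<close>)
  also have "\<dots> = L / real_of_int d + 1" by (simp add: diff_divide_distrib[symmetric])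
  finally show ?thesis by (simp add: L_def)
qed

lemma tele: 
  assumes "m \<ge> 2"
  shows "(\<Sum>k=m..K. 1 / (real k)^2) \<le> 1 / (real m - 1)"
proof (cases "K \<ge> m - 1")
  case True
  have "(\<Sum>k=m..K. 1 / (real k)^2) \<le> 1 / (real m - 1) - 1 / real K"
    using True
  proof (induction K rule: dec_induct)
    case base
    then show ?case using assms by (simp add: of_nat_diff)
  next
    case (step n)
    have n1: "n \<ge> 1" using step assms by auto
    have "(\<Sum>k=m..Suc n. 1 / (real k)^2) = (\<Sum>k=m..n. 1 / (real k)^2) + 1 / (real (Suc n))^2"
      using step assms by (simp add: sum.atLeast_Suc_atMost_Suc_shift del: sum.cl_ivl_Suc) (subst sum.cl_ivl_Suc, auto)
    also have "\<dots> \<le> 1 / (real m - 1) - 1 / real n + 1 / (real (Suc n))^2" using step by simp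
    also have "\<dots> \<le> 1 / (real m - 1) - 1 / real (Suc n)"
    proof -
      have e: "1 / real n - 1 / real (Suc n) = 1 / (real n * real (Suc n))"
        using n1 by (simp add: field_simps)
      have "1 / (real (Suc n))^2 \<le> 1 / (real n * real (Suc n))"
        unfolding power2_eq_square using n1 by (intro divide_left_mono mult_right_mono) auto
      then have "1 / (real (Suc n))^2 \<le> 1 / real n - 1 / real (Suc n)" using e by simp
      then show ?thesis by linarith
    qed
    finally show ?case .
  qed
  moreover have "1 / real K \<ge> 0" by simp
  ultimately show ?thesis by linarith
next
  case False
  then have "{m..K} = {}" by auto
  then show ?thesis using assms by simp
qed

lemma powr_lb:
  fixes c N :: real
  assumes "c \<ge> 0" "k > 0" "c ^ k \<le> N"
  shows "c \<le> N powr (1 / real k)"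
proof (cases "c = 0")
  case True then show ?thesis by simp
next
  case False
  then have "c = (c ^ k) powr (1 / real k)" using assms
    by (simp add: powr_realpow[symmetric] powr_powr)
  also have "\<dots> \<le> N powr (1 / real k)" using assms by (intro powr_mono2) auto
  finally show ?thesis .
qed


lemma aux_frac: "b \<noteq> 0 \<Longrightarrow> d \<noteq> 0 \<Longrightarrow> a * d = c * b \<Longrightarrow> 6 * a / b = 6 * c / (d::real)"
  by (simp add: field_simps)

theorem lemma4p3:
  fixes N :: real
  assumes "N \<ge> 10 ^ 40"
  defines "X \<equiv> real_of_int (Max (setA N))"
  defines "z \<equiv> X powr (1/5)"
  defines "y \<equiv> X powr (1/1.85)"
  shows "(\<Sum>q \<in> {q :: nat. prime q \<and> z \<le> real q \<and> real q < y}.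
            real (card (multiples_in (setA N) (int q ^ 2))))
         \<le> 0.03 * real (card (setA N)) powr 0.82"
proof -
  note N0 = assms(1)
  have Npos: "N > 0" "N \<ge> 1" using N0 by (smt (verit) one_le_power)+
  define L where "L = 3 * N powr (2/3)"
  define A where "A = setA N"
  define P where "P = {q :: nat. prime q \<and> z \<le> real q \<and> real q < y}"
  define f where "f = (\<lambda>q::nat. real (card (multiples_in A (int q ^ 2))))"
  have p3: "10000000000000 \<le> N powr (1/3)" using powr_lb[of "10^13" 3 N] N0 by simp
  have p5: "100000000 \<le> N powr (1/5)" using powr_lb[of "10^8" 5 N] N0 by simp
  have p30: "21 \<le> N powr (1/30)" using powr_lb[of "21" 30 N] N0 by simp
  have p24: "46 \<le> N powr (1/24)" using powr_lb[of "46" 24 N] N0 by simp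
  have e1: "N powr (2/3) = N powr (1/3) * N powr (1/3)" using Npos by (simp add: powr_add[symmetric])
  have e2: "N = N powr (2/3) * N powr (1/3)"
  proof -
    have "N powr (2/3) * N powr (1/3) = N powr 1" using Npos by (simp add: powr_add[symmetric])
    then show ?thesis using Npos by simp
  qed
  have e3: "N powr (2/3) * N powr (1/30) = N powr (1/2) * N powr (1/5)"
    using Npos by (simp add: powr_add[symmetric])
  have e4: "N powr (13/24) = N powr (1/2) * N powr (1/24)"
    using Npos by (simp add: powr_add[symmetric])
  have N23: "N powr (2/3) \<ge> 1"
  proof -
    have o: "1 \<le> N powr (1/3)" using p3 by linarith
    have "1 * 1 \<le> N powr (1/3) * N powr (1/3)" using o by (intro mult_mono) auto
    then show ?thesis using e1 by simp
  qed
  have Lsmall: "L \<le> N / 1000"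
  proof -
    have "N powr (2/3) * 10000000000000 \<le> N powr (2/3) * N powr (1/3)" using p3 N23 by (intro mult_left_mono) auto
    then show ?thesis using e2 N23 unfolding L_def by linarith
  qed
  have Lbig: "L \<ge> 3" using N23 unfolding L_def by simp
  have Aeq: "A = {\<lfloor>N\<rfloor>+1 .. \<lceil>N + L\<rceil>-1}" unfolding A_def setA_def L_def by (rule Ioo_int_eq)
  have finA: "finite A" using Aeq by simp
  have cardA: "real (card A) \<ge> L - 1"
    using card_Ioo_int_ge[where a=N and b="N + L"] unfolding A_def setA_def L_def by simp
  have Ane: "A \<noteq> {}" using cardA Lbig by auto
  have XA: "Max A \<in> A" using finA Ane by simp
  have Xb: "N < X" "X < N + L" using XA unfolding X_def A_def setA_def L_def by auto
  have aX: "real_of_int a \<le> X" if "a \<in> A" for a using finA that unfolding X_def A_def[symmetric] by simp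
  have N2: "N powr (1/2) = sqrt N" using Npos by (simp add: powr_half_sqrt)
  have sX: "sqrt X \<le> 1.001 * N powr (1/2)"
  proof -
    have "(1.001 * sqrt N)^2 = 1.002001 * N" using Npos by (simp add: power_mult_distrib power_divide)
    then have "X \<le> (1.001 * sqrt N)^2" using Xb Lsmall Npos by simp
    then have "sqrt X \<le> sqrt ((1.001 * sqrt N)^2)" by (rule real_sqrt_le_mono)
    then show ?thesis using N2 Npos by simp
  qed
  have zb: "z \<ge> N powr (1/5)" unfolding z_def using Xb Npos by (intro powr_mono2) auto
  define m where "m = nat \<lceil>z\<rceil>"
  define K where "K = nat \<lfloor>sqrt X\<rfloor>"
  have z0: "z \<ge> 0" using zb by (smt (verit) powr_ge_zero)
  have mz: "real m \<ge> z"
  proof -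
    have "real m = real_of_int \<lceil>z\<rceil>" unfolding m_def using z0 by simp
    then show ?thesis by simp
  qed
  have m2: "m \<ge> 2" using mz zb p5 by simp
  have qm: "q \<ge> m" if "q \<in> P" for q
    using that unfolding P_def m_def by (simp add: ceiling_le_iff nat_le_iff)
  have fpos: "f q = 0" if "q \<in> P" "q \<notin> {m..K}" for q
  proof -
    have qK: "q > K" using that qm by auto
    have "multiples_in A (int q ^ 2) = {}"
    proof (rule ccontr)
      assume "multiples_in A (int q ^ 2) \<noteq> {}"
      then obtain a where a: "a \<in> A" "int q ^ 2 dvd a" unfolding multiples_in_def by auto
      have "real_of_int a > N" using a unfolding A_def setA_def by simp
      then have "real_of_int a > 0" using Npos by linarith
      then have "a > 0" by simp
      then have "int q ^ 2 \<le> a" using a by (simp add: zdvd_imp_le)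
      then have "real q ^ 2 \<le> X" using aX[OF a(1)]
        by (smt (verit) of_int_le_iff of_int_of_nat_eq of_int_power)
      then have "real q \<le> sqrt X" by (simp add: real_le_rsqrt)
      then have "int q \<le> \<lfloor>sqrt X\<rfloor>" by (simp add: le_floor_iff)
      then show False using qK unfolding K_def by linarith
    qed
    then show ?thesis unfolding f_def by simp
  qed
  show ?thesis
  proof (cases "finite P")
    case False
    then show ?thesis unfolding P_def by simp
  next
    case finP: True
    have "(\<Sum>q\<in>P. f q) = (\<Sum>q\<in>P \<inter> {m..K}. f q)"
      using fpos finP by (intro sum.mono_neutral_right) auto
    also have "\<dots> \<le> (\<Sum>q\<in>P \<inter> {m..K}. L / (real q)^2 + 1)"
    proof (rule sum_mono)
      fix q assume "q \<in> P \<inter> {m..K}"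
      then have "q > 0" unfolding P_def using prime_gt_0_nat by auto
      then show "f q \<le> L / (real q)^2 + 1"
        using card_mult_le[of "int q ^ 2" N] unfolding f_def L_def A_def by simp
    qed
    also have "\<dots> \<le> (\<Sum>q\<in>{m..K}. L / (real q)^2 + 1)"
      by (intro sum_mono2) (use Lbig in auto)
    also have "\<dots> = L * (\<Sum>q=m..K. 1 / (real q)^2) + real (card {m..K})"
      by (simp add: sum.distrib sum_distrib_left)
    also have "\<dots> \<le> L * (1 / (real m - 1)) + real K"
    proof -
      have "L * (\<Sum>q=m..K. 1 / (real q)^2) \<le> L * (1 / (real m - 1))"
        using tele[OF m2] Lbig by (intro mult_left_mono) auto
      moreover have "card {m..K} \<le> K" using m2 by simp
      ultimately show ?thesis by linarith
    qed
    also have "\<dots> \<le> 6 / 21 * N powr (1/2) + 1.001 * N powr (1/2)"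
    proof -
      have h1: "real m - 1 \<ge> N powr (1/5) / 2" using mz zb p5 by linarith
      have "L * (1 / (real m - 1)) = L / (real m - 1)" by simp
      also have "\<dots> \<le> L / (N powr (1/5) / 2)"
      proof -
        have "real m - 1 > 0" "N powr (1/5) > 0" using h1 p5 by linarith+
        then have "0 < (real m - 1) * (N powr (1/5) / 2)" by simp
        then show ?thesis using h1 Lbig by (intro divide_left_mono) auto
      qed
      also have "\<dots> = 6 * N powr (2/3) / N powr (1/5)" unfolding L_def by simp
      also have "\<dots> = 6 * N powr (1/2) / N powr (1/30)"
        using e3 p5 p30 by (intro aux_frac) auto
      also have "\<dots> \<le> 6 * N powr (1/2) / 21"
        using p30 Npos by (intro divide_left_mono) auto
      finally have "L * (1 / (real m - 1)) \<le> 6 / 21 * N powr (1/2)" by simp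
      moreover have "real K \<le> sqrt X" unfolding K_def
        using Xb Npos by (simp add: of_nat_nat)
      ultimately show ?thesis using sX by linarith
    qed
    also have "\<dots> \<le> 0.03 * N powr (13/24)"
    proof -
      have h: "N powr (1/2) * 9007 \<le> N powr (1/2) * (210 * N powr (1/24))"
        using p24 by (intro mult_left_mono) auto
      have "N powr (1/2) \<ge> 0" by simp
      then show ?thesis unfolding e4 using h by (simp add: field_simps) 
    qed
    also have "\<dots> \<le> 0.03 * real (card A) powr 0.82"
    proof -
      have "N powr (13/24) \<le> N powr (2/3 * 0.82)" using Npos by (intro powr_mono) auto
      also have "\<dots> = (N powr (2/3)) powr 0.82" by (simp add: powr_powr)
      also have "\<dots> \<le> real (card A) powr 0.82"
        using cardA Lbig unfolding L_def by (intro powr_mono2) auto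
      finally show ?thesis by simp
    qed
    finally show ?thesis unfolding P_def f_def A_def .
  qed
qed

end
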